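(* Let $\rho\ge0$ be a locally integrable function on $\mathbb{R}^n$, $x\in\mathbb{R}^n$, and $\mathcal{M}\rho(\sigma,x)=\int_{|x-y|\le\sigma}\rho(y)dy$. Let $\beta>1$. (i) If $n=2$, $s\in(0,1)$ and $\mathcal{M}\rho(\sigma,x)\le(\ln\sigma^{-1})^{-\beta}$ for all $\sigma\in(0,s]$, then $$\int_{|x-y|\le s}\ln^{-}|x-y|\,\rho(y)\,dy\le\Big(1+\frac{1}{\beta-1}\Big)(\ln s^{-1})^{1-\beta}.$$ (ii) If $n=3$ and $\mathcal{M}\rho(\sigma,x)\le\sigma^{\beta}$ for all $\sigma\in(0,s]$, then $$\int_{|x-y|\le s}|x-y|^{-1}\rho(y)\,dy\le\Big(1+\frac{1}{\beta-1}\Big)s^{\beta-1}.$$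
   Context: $\ln^{-}(t)=-\ln\min\{t,1\}$. *)

theory Defs
  imports "HOL-Analysis.Analysis"
begin

definition lnminus :: "real \<Rightarrow> real" where
  "lnminus t = - ln (min t 1)"

definition locally_integrable :: "('a::euclidean_space \<Rightarrow> real) \<Rightarrow> bool" where
  "locally_integrable f \<longleftrightarrow> (\<forall>c r. set_integrable lborel (cball c r) f)"

definition ball_mass :: "('a::euclidean_space \<Rightarrow> real) \<Rightarrow> real \<Rightarrow> 'a \<Rightarrow> ennreal" where
  "ball_mass \<rho> \<sigma> x = (\<integral>\<^sup>+ y. ennreal (indicator (cball x \<sigma>) y * \<rho> y) \<partial>lborel)"

end

theory Submission imports Defs begin

lemma improper_bound:
  fixes f F :: "real \<Rightarrow> real"
  assumes s: "0 < s"
    and fm[measurable]: "f \<in> borel_measurable borel"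
    and nn: "\<And>t. 0 < t \<Longrightarrow> t \<le> s \<Longrightarrow> 0 \<le> f t"
    and der: "\<And>t. 0 < t \<Longrightarrow> t \<le> s \<Longrightarrow> (F has_real_derivative f t) (at t)"
    and low: "\<And>t. 0 < t \<Longrightarrow> t \<le> s \<Longrightarrow> C \<le> F t"
  shows "(\<integral>\<^sup>+t. ennreal (f t) * indicator {0<..s} t \<partial>lborel) \<le> ennreal (F s - C)"
proof -
  define a where "a i = s / real (Suc i)" for i
  have apos: "0 < a i" for i using s by (simp add: a_def)
  have ale: "a i \<le> s" for i using s by (simp add: a_def divide_le_eq)
  have amono: "a (Suc i) \<le> a i" for i using s by (simp add: a_def frac_le)
  define G where "G i t = ennreal (f t) * indicator {a i..s} t" for i t
  have inc: "incseq G"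
  proof (rule incseq_SucI, rule le_funI)
    fix i t show "G i t \<le> G (Suc i) t"
      using amono[of i] by (auto simp: G_def indicator_def)
  qed
  have Gm: "G i \<in> borel_measurable lborel" for i unfolding G_def by measurable
  have sup: "(SUP i. G i t) = ennreal (f t) * indicator {0<..s} t" for t
  proof (cases "0 < t \<and> t \<le> s")
    case True
    obtain n where n: "s / t < real n" using reals_Archimedean2 by blast
    have "s / real (Suc n) \<le> t"
      using True n s by (simp add: divide_le_eq pos_divide_less_eq mult.commute distrib_left)
    then have "G n t = ennreal (f t)" using True by (simp add: G_def a_def)
    moreover have "G i t \<le> ennreal (f t)" for i by (simp add: G_def indicator_def)
    ultimately have "(SUP i. G i t) = ennreal (f t)"
      by (intro antisym SUP_least) (auto intro: SUP_upper2[of n])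
    then show ?thesis using True by simp
  next
    case False
    then have "G i t = 0" for i using apos[of i] by (auto simp: G_def indicator_def)
    then show ?thesis using False by simp
  qed
  have "(\<integral>\<^sup>+t. ennreal (f t) * indicator {0<..s} t \<partial>lborel) = (SUP i. integral\<^sup>N lborel (G i))"
    using nn_integral_monotone_convergence_SUP[OF inc Gm] by (simp add: sup)
  also have "\<dots> \<le> ennreal (F s - C)"
  proof (rule SUP_least)
    fix i
    have "integral\<^sup>N lborel (G i) = ennreal (F s - F (a i))"
      unfolding G_def
      by (rule nn_integral_FTC_Icc) (use apos[of i] ale[of i] in \<open>auto intro!: der nn\<close>)
    also have "\<dots> \<le> ennreal (F s - C)"
      using low[OF apos ale, of i] by (intro ennreal_leI) simp
    finally show "integral\<^sup>N lborel (G i) \<le> ennreal (F s - C)" .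
  qed
  finally show ?thesis .
qed

lemma main_bound:
  fixes \<rho> :: "'a::euclidean_space \<Rightarrow> real" and g h B :: "real \<Rightarrow> real"
  assumes s: "0 < s"
    and rho_nn: "\<forall>y. \<rho> y \<ge> 0"
    and rho_meas[measurable]: "(\<lambda>y. indicator (cball x s) y * \<rho> y) \<in> borel_measurable lborel"
    and h_meas[measurable]: "h \<in> borel_measurable borel"
    and h_nn: "\<And>t. 0 < t \<Longrightarrow> h t \<ge> 0"
    and g0: "g 0 = 0"
    and gs: "g s \<ge> 0"
    and gd: "\<And>d. 0 < d \<Longrightarrow> d \<le> s \<Longrightarrow>
       ennreal (g d) = ennreal (g s) + (\<integral>\<^sup>+t. ennreal (h t) * indicator {d..s} t \<partial>lborel)"
    and M: "\<And>\<sigma>. 0 < \<sigma> \<Longrightarrow> \<sigma> \<le> s \<Longrightarrow> ball_mass \<rho> \<sigma> x \<le> ennreal (B \<sigma>)"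
    and I: "(\<integral>\<^sup>+t. ennreal (h t * B t) * indicator {0<..s} t \<partial>lborel) \<le> ennreal K"
    and B_nn: "\<And>t. 0 < t \<Longrightarrow> B t \<ge> 0"
    and K: "K \<ge> 0"
  shows "(\<integral>\<^sup>+ y. ennreal (indicator (cball x s) y * g (dist x y) * \<rho> y) \<partial>lborel)
          \<le> ennreal (g s * B s + K)"
proof -
  define \<rho>' where "\<rho>' y = indicator (cball x s) y * \<rho> y" for y
  have \<rho>'m[measurable]: "\<rho>' \<in> borel_measurable lborel" using rho_meas by (simp add: \<rho>'_def[abs_def])
  have \<rho>'nn: "\<rho>' y \<ge> 0" for y using rho_nn by (simp add: \<rho>'_def)
  define C where "C y t = ennreal (h t * indicator {0<..s} t) * ennreal (indicator (cball x t) y * \<rho>' y)" for y t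
  have Cm: "case_prod (\<lambda>t y. C y t) \<in> borel_measurable (lborel \<Otimes>\<^sub>M lborel)"
  proof -
    have cl: "{p :: real \<times> 'a. dist x (snd p) \<le> fst p} \<in> sets borel"
      by (intro borel_closed closed_Collect_le) (intro continuous_intros)+
    have ind: "(\<lambda>p :: real \<times> 'a. indicator (cball x (fst p)) (snd p) :: real) \<in> borel_measurable borel"
    proof -
      have "(\<lambda>p :: real \<times> 'a. indicator (cball x (fst p)) (snd p) :: real)
           = indicator {p :: real \<times> 'a. dist x (snd p) \<le> fst p}"
        by (auto simp: indicator_def mem_cball)
      then show ?thesis using cl by simp
    qed
    have ind'[measurable]: "(\<lambda>p :: real \<times> 'a. indicator (cball x (fst p)) (snd p) :: real) \<in> borel_measurable (lborel \<Otimes>\<^sub>M lborel)"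
      using ind by (simp add: lborel_prod measurable_lborel1)
    show ?thesis
      unfolding C_def split_beta' by measurable
  qed
  have pw: "ennreal (indicator (cball x s) y * g (dist x y) * \<rho> y)
      \<le> ennreal (g s) * ennreal (\<rho>' y) + (\<integral>\<^sup>+t. C y t \<partial>lborel)" for y
  proof (cases "y \<in> cball x s \<and> y \<noteq> x")
    case False
    then have "indicator (cball x s) y * g (dist x y) * \<rho> y = 0"
      using g0 by (auto simp: indicator_def)
    then show ?thesis by (simp only:) simp
  next
    case True
    define d where "d = dist x y"
    have d: "0 < d" "d \<le> s" using True by (auto simp: d_def mem_cball)
    have \<rho>y: "\<rho>' y = \<rho> y" using True by (simp add: \<rho>'_def)
    have Ceq: "C y t = ennreal (h t) * indicator {d..s} t * ennreal (\<rho> y)" for t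
    proof -
      have "indicator (cball x t) y = (indicator {d..} t :: real)"
        by (simp add: indicator_def mem_cball d_def)
      then show ?thesis using d h_nn[of t] rho_nn \<rho>y
        by (auto simp: C_def indicator_def ennreal_mult')
    qed
    have "ennreal (indicator (cball x s) y * g (dist x y) * \<rho> y) = ennreal (g d) * ennreal (\<rho> y)"
      using True rho_nn ennreal_mult'[of "\<rho> y" "g (dist x y)"] by (simp add: d_def mult.commute)
    also have "\<dots> = ennreal (g s) * ennreal (\<rho> y) + (\<integral>\<^sup>+t. ennreal (h t) * indicator {d..s} t \<partial>lborel) * ennreal (\<rho> y)"
      by (simp add: gd[OF d] distrib_right)
    also have "(\<integral>\<^sup>+t. ennreal (h t) * indicator {d..s} t \<partial>lborel) * ennreal (\<rho> y) = (\<integral>\<^sup>+t. C y t \<partial>lborel)"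
      by (simp add: Ceq nn_integral_multc)
    finally show ?thesis by (simp add: \<rho>y)
  qed
  have "(\<integral>\<^sup>+ y. ennreal (indicator (cball x s) y * g (dist x y) * \<rho> y) \<partial>lborel)
      \<le> (\<integral>\<^sup>+ y. ennreal (g s) * ennreal (\<rho>' y) + (\<integral>\<^sup>+t. C y t \<partial>lborel) \<partial>lborel)"
    by (rule nn_integral_mono) (rule pw)
  also have "\<dots> = ennreal (g s) * (\<integral>\<^sup>+ y. ennreal (\<rho>' y) \<partial>lborel) + (\<integral>\<^sup>+ y. \<integral>\<^sup>+t. C y t \<partial>lborel \<partial>lborel)"
  proof -
    have m2: "(\<lambda>y. \<integral>\<^sup>+t. C y t \<partial>lborel) \<in> borel_measurable lborel"
      using lborel.borel_measurable_nn_integral_fst[OF measurable_pair_swap[OF Cm]] by (simp add: split_beta')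
    show ?thesis
      using m2 by (subst nn_integral_add) (auto simp: nn_integral_cmult measurable_lborel1[symmetric])
  qed
  also have "(\<integral>\<^sup>+ y. \<integral>\<^sup>+t. C y t \<partial>lborel \<partial>lborel) = (\<integral>\<^sup>+ t. \<integral>\<^sup>+y. C y t \<partial>lborel \<partial>lborel)"
    using lborel_pair.Fubini'[OF Cm] by simp
  also have "\<dots> \<le> (\<integral>\<^sup>+t. ennreal (h t * B t) * indicator {0<..s} t \<partial>lborel)"
  proof (rule nn_integral_mono)
    fix t
    show "(\<integral>\<^sup>+y. C y t \<partial>lborel) \<le> ennreal (h t * B t) * indicator {0<..s} t"
    proof (cases "0 < t \<and> t \<le> s")
      case True
      have "(\<integral>\<^sup>+y. C y t \<partial>lborel) = ennreal (h t) * (\<integral>\<^sup>+y. ennreal (indicator (cball x t) y * \<rho>' y) \<partial>lborel)"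
        using True by (simp add: C_def) (rule nn_integral_cmult, intro measurable_compose[OF _ measurable_ennreal] borel_measurable_times borel_measurable_indicator \<rho>'m, simp)
      also have "(\<integral>\<^sup>+y. ennreal (indicator (cball x t) y * \<rho>' y) \<partial>lborel) = ball_mass \<rho> t x"
        unfolding ball_mass_def
        by (rule nn_integral_cong) (use True in \<open>auto simp: \<rho>'_def indicator_def mem_cball\<close>)
      also have "ennreal (h t) * ball_mass \<rho> t x \<le> ennreal (h t) * ennreal (B t)"
        using M True by (intro mult_left_mono) auto
      also have "\<dots> = ennreal (h t * B t) * indicator {0<..s} t"
        using True h_nn B_nn by (simp add: ennreal_mult')
      finally show ?thesis .
    next
      case False
      then show ?thesis by (auto simp: C_def)
    qed
  qed
  also note I
  also have "(\<integral>\<^sup>+ y. ennreal (\<rho>' y) \<partial>lborel) = ball_mass \<rho> s x"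
    by (simp add: ball_mass_def \<rho>'_def)
  also note M[OF s order.refl]
  finally have "(\<integral>\<^sup>+ y. ennreal (indicator (cball x s) y * g (dist x y) * \<rho> y) \<partial>lborel)
      \<le> ennreal (g s) * ennreal (B s) + ennreal K" by (simp add: add_left_mono add_right_mono mult_left_mono)
  also have "\<dots> = ennreal (g s * B s + K)"
    using gs B_nn[OF s] K by (simp add: ennreal_mult' ennreal_plus)
  finally show ?thesis .
qed

lemma der1:
  assumes b: "\<beta> > 1" and t: "0 < t" "t < 1"
  shows "((\<lambda>t. (- ln t) powr (1-\<beta>) / (\<beta>-1)) has_real_derivative (1/t * ln (1/t) powr (-\<beta>))) (at t)"
proof -
  have L: "- ln t > 0" using t by simp
  have d: "DERIV (\<lambda>t. - ln t) t :> - (1/t)"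
    using t by (auto intro!: derivative_eq_intros)
  have "DERIV (\<lambda>t. (- ln t) powr (1-\<beta>) / (\<beta>-1)) t :> (1-\<beta>) * (- ln t) powr (1-\<beta> - of_nat 1) * (- (1/t)) / (\<beta>-1)"
    by (rule DERIV_cdivide[OF DERIV_fun_powr[OF d L]])
  moreover have "(1-\<beta>) * (- ln t) powr (1-\<beta> - of_nat 1) * (- (1/t)) / (\<beta>-1) = 1/t * ln (1/t) powr (-\<beta>)"
    using b t by (simp add: ln_div field_simps)
  ultimately show ?thesis by simp
qed

lemma der2:
  assumes b: "\<beta> > 1" and t: "0 < t"
  shows "((\<lambda>t. t powr (\<beta>-1) / (\<beta>-1)) has_real_derivative (1/t^2 * t powr \<beta>)) (at t)"
proof -
  have "DERIV (\<lambda>t. t powr (\<beta>-1) / (\<beta>-1)) t :> (\<beta>-1) * t powr (\<beta>-1-1) / (\<beta>-1)"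
    by (rule DERIV_cdivide[OF has_real_derivative_powr[OF t]])
  moreover have "(\<beta>-1) * t powr (\<beta>-1-1) / (\<beta>-1) = 1/t^2 * t powr \<beta>"
    using b t by (simp add: powr_diff power2_eq_square)
  ultimately show ?thesis by simp
qed

lemma loc_meas:
  assumes "locally_integrable (\<rho> :: 'a::euclidean_space \<Rightarrow> real)"
  shows "(\<lambda>y. indicator (cball x s) y * \<rho> y) \<in> borel_measurable lborel"
proof -
  have "set_integrable lborel (cball x s) \<rho>" using assms by (simp add: locally_integrable_def)
  then show ?thesis unfolding set_integrable_def by (simp add: borel_measurable_integrable)
qed

lemma part1:
  fixes \<rho> :: "'a::euclidean_space \<Rightarrow> real"
  assumes b: "\<beta> > 1" and nn: "\<forall>y. \<rho> y \<ge> 0" and li: "locally_integrable \<rho>"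
    and s: "0 < s" "s < 1"
    and M: "\<forall>\<sigma>. 0 < \<sigma> \<and> \<sigma> \<le> s \<longrightarrow> ball_mass \<rho> \<sigma> x \<le> ennreal ((ln (1 / \<sigma>)) powr (- \<beta>))"
  shows "(\<integral>\<^sup>+ y. ennreal (indicator (cball x s) y * lnminus (dist x y) * \<rho> y) \<partial>lborel)
         \<le> ennreal ((1 + 1 / (\<beta> - 1)) * (ln (1 / s)) powr (1 - \<beta>))"
proof -
  have lnm: "lnminus d = - ln d" if "0 < d" "d \<le> s" for d
    using that s by (simp add: lnminus_def)
  have "(\<integral>\<^sup>+ y. ennreal (indicator (cball x s) y * lnminus (dist x y) * \<rho> y) \<partial>lborel)
     \<le> ennreal (lnminus s * (ln (1/s)) powr (- \<beta>) + (- ln s) powr (1-\<beta>) / (\<beta>-1))"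
  proof (rule main_bound[where h="\<lambda>t. 1/t"])
    show "(\<lambda>y. indicator (cball x s) y * \<rho> y) \<in> borel_measurable lborel" by (rule loc_meas[OF li])
    show "lnminus 0 = 0" by (simp add: lnminus_def)
    show "lnminus s \<ge> 0" using s by (simp add: lnm)
    show "(\<lambda>t. 1/t :: real) \<in> borel_measurable borel" by measurable
    fix d assume d: "0 < d" "d \<le> s"
    have "(\<integral>\<^sup>+t. ennreal (1/t) * indicator {d..s} t \<partial>lborel) = ennreal (ln s - ln d)"
      by (rule nn_integral_FTC_Icc) (use d in \<open>auto intro!: derivative_eq_intros\<close>)
    then show "ennreal (lnminus d) = ennreal (lnminus s) + (\<integral>\<^sup>+t. ennreal (1/t) * indicator {d..s} t \<partial>lborel)"
      using d s by (simp add: lnm ennreal_plus[symmetric] ln_le_cancel_iff del: ennreal_plus)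
  next
    show "(\<integral>\<^sup>+t. ennreal (1/t * ln (1/t) powr (- \<beta>)) * indicator {0<..s} t \<partial>lborel)
       \<le> ennreal ((- ln s) powr (1-\<beta>) / (\<beta>-1))"
      using b s
      by (intro improper_bound[where F="\<lambda>t. (- ln t) powr (1-\<beta>) / (\<beta>-1)" and C=0, simplified])
         (auto, use der1[OF b] in simp)
  qed (use s b M nn in auto)
  also have "lnminus s * (ln (1/s)) powr (- \<beta>) + (- ln s) powr (1-\<beta>) / (\<beta>-1)
      = (1 + 1 / (\<beta> - 1)) * (ln (1 / s)) powr (1 - \<beta>)"
  proof -
    have L: "ln (1/s) > 0" using s by simp
    have "ln (1/s) * ln (1/s) powr (-\<beta>) = ln (1/s) powr (1-\<beta>)"
    proof -
      have "ln (1/s) powr (1-\<beta>) = ln (1/s) powr (1 + (-\<beta>))" by simp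
      also have "\<dots> = ln (1/s) powr 1 * ln (1/s) powr (-\<beta>)" by (rule powr_add)
      finally show ?thesis using L by simp
    qed
    then show ?thesis using s b by (simp add: lnm ln_div field_simps)
  qed
  finally show ?thesis .
qed


lemma part2:
  fixes \<rho> :: "'a::euclidean_space \<Rightarrow> real"
  assumes b: "\<beta> > 1" and nn: "\<forall>y. \<rho> y \<ge> 0" and li: "locally_integrable \<rho>"
    and s: "0 < s"
    and M: "\<forall>\<sigma>. 0 < \<sigma> \<and> \<sigma> \<le> s \<longrightarrow> ball_mass \<rho> \<sigma> x \<le> ennreal (\<sigma> powr \<beta>)"
  shows "(\<integral>\<^sup>+ y. ennreal (indicator (cball x s) y * inverse (dist x y) * \<rho> y) \<partial>lborel)
         \<le> ennreal ((1 + 1 / (\<beta> - 1)) * s powr (\<beta> - 1))"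
proof -
  have "(\<integral>\<^sup>+ y. ennreal (indicator (cball x s) y * inverse (dist x y) * \<rho> y) \<partial>lborel)
     \<le> ennreal (inverse s * s powr \<beta> + s powr (\<beta>-1) / (\<beta>-1))"
  proof (rule main_bound[where h="\<lambda>t. 1/t^2"])
    show "(\<lambda>y. indicator (cball x s) y * \<rho> y) \<in> borel_measurable lborel" by (rule loc_meas[OF li])
    show "(\<lambda>t. 1/t^2 :: real) \<in> borel_measurable borel" by measurable
    fix d assume d: "0 < d" "d \<le> s"
    have "(\<integral>\<^sup>+t. ennreal (1/t^2) * indicator {d..s} t \<partial>lborel) = ennreal ((- inverse s) - (- inverse d))"
      by (rule nn_integral_FTC_Icc) (use d in \<open>auto intro!: derivative_eq_intros simp: power2_eq_square field_simps\<close>)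
    then show "ennreal (inverse d) = ennreal (inverse s) + (\<integral>\<^sup>+t. ennreal (1/t^2) * indicator {d..s} t \<partial>lborel)"
      using d s by (simp add: ennreal_plus[symmetric] le_imp_inverse_le del: ennreal_plus)
  next
    show "(\<integral>\<^sup>+t. ennreal (1/t^2 * t powr \<beta>) * indicator {0<..s} t \<partial>lborel)
       \<le> ennreal (s powr (\<beta>-1) / (\<beta>-1))"
      using b s
      by (intro improper_bound[where F="\<lambda>t. t powr (\<beta>-1) / (\<beta>-1)" and C=0, simplified])
         (auto, use der2[OF b] in simp)
  qed (use s b M nn in auto)
  also have "inverse s * s powr \<beta> + s powr (\<beta>-1) / (\<beta>-1) = (1 + 1 / (\<beta> - 1)) * s powr (\<beta> - 1)"
    using s b by (simp add: powr_diff field_simps)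
  finally show ?thesis .
qed

theorem lemma2p1:
  fixes \<beta> :: real
  assumes "\<beta> > 1"
  shows
   "(\<forall>(\<rho> :: real^2 \<Rightarrow> real) (x :: real^2) (s :: real).
       (\<forall>y. \<rho> y \<ge> 0) \<longrightarrow> locally_integrable \<rho> \<longrightarrow> 0 < s \<longrightarrow> s < 1 \<longrightarrow>
       (\<forall>\<sigma>. 0 < \<sigma> \<and> \<sigma> \<le> s \<longrightarrow> ball_mass \<rho> \<sigma> x \<le> ennreal ((ln (1 / \<sigma>)) powr (- \<beta>))) \<longrightarrow>
       (\<integral>\<^sup>+ y. ennreal (indicator (cball x s) y * lnminus (dist x y) * \<rho> y) \<partial>lborel)
         \<le> ennreal ((1 + 1 / (\<beta> - 1)) * (ln (1 / s)) powr (1 - \<beta>)))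
    \<and>
    (\<forall>(\<rho> :: real^3 \<Rightarrow> real) (x :: real^3) (s :: real).
       (\<forall>y. \<rho> y \<ge> 0) \<longrightarrow> locally_integrable \<rho> \<longrightarrow> 0 < s \<longrightarrow>
       (\<forall>\<sigma>. 0 < \<sigma> \<and> \<sigma> \<le> s \<longrightarrow> ball_mass \<rho> \<sigma> x \<le> ennreal (\<sigma> powr \<beta>)) \<longrightarrow>
       (\<integral>\<^sup>+ y. ennreal (indicator (cball x s) y * inverse (dist x y) * \<rho> y) \<partial>lborel)
         \<le> ennreal ((1 + 1 / (\<beta> - 1)) * s powr (\<beta> - 1)))"
  using part1[OF assms] part2[OF assms] by blast

end
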